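(* Let $F$ be a smooth real-valued function defined on an open neighbourhood of $\dot P_m$ in the real vector space of $m\times m$ Hermitian matrices, and let $\mathcal M(F)$ be the $m\times m$ matrix of its complex partial derivatives defined below. Then the gradient vector of $F|_{\dot P_m}$ at $\rho\in\dot P_m$ with respect to the quantum SLD Fisher metric is $$(\mathrm{grad}\,F)(\rho)=\tfrac12\big(\rho\,\mathcal M(F)+\mathcal M(F)\,\rho\big)-\operatorname{tr}\big(\rho\,\mathcal M(F)\big)\,\rho .$$ Consequently the gradient system $\frac{d\rho}{dt}=-(\mathrm{grad}\,F)(\rho)$ on $(\dot P_m,\langle\!\langle\cdot,\cdot\rangle\!\rangle^{QF})$ is governed by $$\frac{d\rho}{dt}=-\tfrac12\big(\rho\,\mathcal M(F)+\mathcal M(F)\,\rho\big)+\operatorname{tr}\big(\rho\,\mathcal M(F)\big)\,\rho .$$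
   Context: $\dot P_m$ denotes the set of $m\times m$ complex Hermitian positive definite matrices $\rho$ with $\operatorname{tr}\rho=1$ (regular density matrices). Its tangent space at $\rho$ is $T_\rho\dot P_m=\{\Xi\in M(m,m):\Xi^\dagger=\Xi,\ \operatorname{tr}\Xi=0\}$. For $\Xi\in T_\rho\dot P_m$ the symmetric logarithmic derivative $\mathcal L_\rho(\Xi)$ is the matrix with $\tfrac12(\rho\mathcal L_\rho(\Xi)+\mathcal L_\rho(\Xi)\rho)=\Xi$, and the quantum SLD Fisher metric is $\langle\!\langle\Xi,\Xi'\rangle\!\rangle^{QF}_\rho=\tfrac12\operatorname{tr}[\rho(\mathcal L_\rho(\Xi)\mathcal L_\rho(\Xi')+\mathcal L_\rho(\Xi')\mathcal L_\rho(\Xi))]$. The gradient $(\mathrm{grad}\,F)(\rho)\in T_\rho\dot P_m$ is defined by $\langle\!\langle(\mathrm{grad}\,F)(\rho),\Xi'\rangle\!\rangle^{QF}_\rho=\frac{d}{dt}\big|_{t=0}F(\gamma(t))$ for all $\Xi'\in T_\rho\dot P_m$, where $\gamma$ is any curve in $\dot P_m$ with $\gamma(0)=\rho$, $\gamma'(0)=\Xi'$. Write the entries of a Hermitian $\rho$ as $\rho_{jk}=\overline{\rho_{kj}}=x_{jk}+iy_{jk}$ ($j<k$, $x_{jk},y_{jk}$ real) and $\rho_{\ell\ell}=z_\ell$ real, and set $\partial/\partial\rho_{ab}=\tfrac12(\partial/\partial x_{ab}-i\,\partial/\partial y_{ab})$, $\partial/\partial\overline\rho_{ab}=\tfrac12(\partial/\partial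 x_{ab}+i\,\partial/\partial y_{ab})$ for $a<b$. Then $\mathcal M(F)$ is the $m\times m$ matrix with $(\mathcal M(F))_{jk}=\partial F/\partial\overline\rho_{jk}$ for $j<k$, $(\mathcal M(F))_{jk}=\partial F/\partial\rho_{kj}$ for $k<j$, and $(\mathcal M(F))_{jj}=\partial F/\partial z_j$. *)

theory Defs
  imports "HOL-Analysis.Analysis"
begin

type_synonym 'n cmat = "complex ^ 'n ^ 'n"

definition mtrace :: "'n::finite cmat \<Rightarrow> complex" where
  "mtrace A = (\<Sum>i\<in>UNIV. A $ i $ i)"

definition cscale :: "complex \<Rightarrow> 'n::finite cmat \<Rightarrow> 'n cmat" (infixr "*\<^sub>M" 75) where
  "c *\<^sub>M A = (\<chi> i j. c * A $ i $ j)"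

definition adjoint_mat :: "'n::finite cmat \<Rightarrow> 'n cmat" where
  "adjoint_mat A = (\<chi> i j. cnj (A $ j $ i))"

definition hermitian :: "'n::finite cmat \<Rightarrow> bool" where
  "hermitian A \<longleftrightarrow> adjoint_mat A = A"

definition Herm :: "'n::finite cmat set" where
  "Herm = {A. hermitian A}"

definition pos_def :: "'n::finite cmat \<Rightarrow> bool" where
  "pos_def A \<longleftrightarrow> hermitian A \<and>
     (\<forall>x::complex^'n. x \<noteq> 0 \<longrightarrow> 0 < Re (\<Sum>i\<in>UNIV. cnj (x $ i) * (A *v x) $ i))"

definition Pdot :: "'n::finite cmat set" where
  "Pdot = {\<rho>. pos_def \<rho> \<and> mtrace \<rho> = 1}"

definition tangent :: "'n::finite cmat set" where
  "tangent = {X. hermitian X \<and> mtrace X = 0}"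

definition SLD :: "'n::finite cmat \<Rightarrow> 'n cmat \<Rightarrow> 'n cmat" where
  "SLD \<rho> X = (THE L. (1/2) *\<^sub>M (\<rho> ** L + L ** \<rho>) = X)"

text \<open>Quantum SLD Fisher metric (the trace is real for Hermitian arguments).\<close>
definition QF :: "'n::finite cmat \<Rightarrow> 'n cmat \<Rightarrow> 'n cmat \<Rightarrow> real" where
  "QF \<rho> X Y = Re ((1/2) * mtrace (\<rho> ** (SLD \<rho> X ** SLD \<rho> Y + SLD \<rho> Y ** SLD \<rho> X)))"

definition is_grad :: "('n::finite cmat \<Rightarrow> real) \<Rightarrow> 'n cmat \<Rightarrow> 'n cmat \<Rightarrow> bool" where
  "is_grad F \<rho> G \<longleftrightarrow> G \<in> tangent \<and>
     (\<forall>X \<in> tangent. \<forall>\<gamma> :: real \<Rightarrow> 'n cmat.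
        (\<forall>\<^sub>F t in nhds 0. \<gamma> t \<in> Pdot) \<and> \<gamma> 0 = \<rho> \<and> (\<gamma> has_vector_derivative X) (at 0)
        \<longrightarrow> ((\<lambda>t. F (\<gamma> t)) has_real_derivative QF \<rho> G X) (at 0))"

definition mat_unit :: "'n::finite \<Rightarrow> 'n \<Rightarrow> 'n cmat" where
  "mat_unit a b = (\<chi> i j. if i = a \<and> j = b then 1 else 0)"

definition pderiv_dir :: "('n::finite cmat \<Rightarrow> real) \<Rightarrow> 'n cmat \<Rightarrow> 'n cmat \<Rightarrow> real" where
  "pderiv_dir F \<rho> E = deriv (\<lambda>t. F (\<rho> + t *\<^sub>R E)) 0"

text \<open>Coordinate directions: for \<open>a < b\<close>, \<open>x_ab\<close> moves \<open>\<rho>_ab\<close> and \<open>\<rho>_ba\<close> by 1;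
  \<open>y_ab\<close> moves \<open>\<rho>_ab\<close> by \<open>i\<close> and \<open>\<rho>_ba\<close> by \<open>-i\<close>; \<open>z_l\<close> moves \<open>\<rho>_ll\<close> by 1.\<close>
definition dx :: "('n::finite cmat \<Rightarrow> real) \<Rightarrow> 'n cmat \<Rightarrow> 'n \<Rightarrow> 'n \<Rightarrow> real" where
  "dx F \<rho> a b = pderiv_dir F \<rho> (mat_unit a b + mat_unit b a)"

definition dy :: "('n::finite cmat \<Rightarrow> real) \<Rightarrow> 'n cmat \<Rightarrow> 'n \<Rightarrow> 'n \<Rightarrow> real" where
  "dy F \<rho> a b = pderiv_dir F \<rho> (\<i> *\<^sub>M mat_unit a b - \<i> *\<^sub>M mat_unit b a)"

definition dz :: "('n::finite cmat \<Rightarrow> real) \<Rightarrow> 'n cmat \<Rightarrow> 'n \<Rightarrow> real" where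
  "dz F \<rho> l = pderiv_dir F \<rho> (mat_unit l l)"

text \<open>The matrix \<open>\<M>(F)\<close>: \<open>\<partial>/\<partial>\<rho>\<^sub>a\<^sub>b = (\<partial>x - i\<partial>y)/2\<close>, \<open>\<partial>/\<partial>conj \<rho>\<^sub>a\<^sub>b = (\<partial>x + i\<partial>y)/2\<close>.\<close>
definition MF :: "('n::{finite,linorder} cmat \<Rightarrow> real) \<Rightarrow> 'n cmat \<Rightarrow> 'n cmat" where
  "MF F \<rho> = (\<chi> j k.
     if j < k then (complex_of_real (dx F \<rho> j k) + \<i> * complex_of_real (dy F \<rho> j k)) / 2
     else if k < j then (complex_of_real (dx F \<rho> k j) - \<i> * complex_of_real (dy F \<rho> k j)) / 2
     else complex_of_real (dz F \<rho> j))"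

end

theory Submission
  imports Defs
begin


lemma cscale_nth[simp]: "(c *\<^sub>M A) $ i $ j = c * A $ i $ j"
  by (simp add: cscale_def)
lemma adj_nth[simp]: "adjoint_mat A $ i $ j = cnj (A $ j $ i)"
  by (simp add: adjoint_mat_def)
lemma mult_nth: "(A ** B) $ i $ j = (\<Sum>k\<in>UNIV. A $ i $ k * B $ k $ j)"
  by (simp add: matrix_matrix_mult_def)

lemma mtrace_add[simp]: "mtrace (A + B) = mtrace A + mtrace B"
  by (simp add: mtrace_def sum.distrib)
lemma mtrace_diff[simp]: "mtrace (A - B) = mtrace A - mtrace B"
  by (simp add: mtrace_def sum_subtractf)
lemma mtrace_cscale[simp]: "mtrace (c *\<^sub>M A) = c * mtrace A"
  by (simp add: mtrace_def sum_distrib_left)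
lemma mtrace_comm: "mtrace (A ** B) = mtrace (B ** A)"
  unfolding mtrace_def mult_nth
  by (subst sum.swap) (simp add: mult.commute)

lemma cscale_mult_left[simp]: "(c *\<^sub>M A) ** B = c *\<^sub>M (A ** B)"
  by (simp add: vec_eq_iff mult_nth sum_distrib_left mult.assoc)
lemma cscale_mult_right[simp]: "A ** (c *\<^sub>M B) = c *\<^sub>M (A ** B)"
  by (simp add: vec_eq_iff mult_nth sum_distrib_left mult.assoc mult.left_commute)
lemma cscale_add: "c *\<^sub>M (A + B) = c *\<^sub>M A + c *\<^sub>M B"
  by (simp add: vec_eq_iff algebra_simps)
lemma cscale_diff: "c *\<^sub>M (A - B) = c *\<^sub>M A - c *\<^sub>M B"
  by (simp add: vec_eq_iff algebra_simps)
lemma cscale_cscale[simp]: "c *\<^sub>M (d *\<^sub>M A) = (c * d) *\<^sub>M A"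
  by (simp add: vec_eq_iff)
lemma cscale_one[simp]: "1 *\<^sub>M A = A"
  by (simp add: vec_eq_iff)
lemma cscale_zero[simp]: "0 *\<^sub>M A = 0" "c *\<^sub>M 0 = 0"
  by (simp_all add: vec_eq_iff)
lemma cscale_scaleR: "r *\<^sub>R A = complex_of_real r *\<^sub>M A"
  by (auto simp: vec_eq_iff) (simp add: scaleR_conv_of_real)
lemma matrix_add_rdistrib': "(B + C) ** A = B ** A + C ** A"
  by (simp add: vec_eq_iff mult_nth distrib_right sum.distrib)
lemma matrix_diff_rdistrib: "(B - C) ** (A::'n::finite cmat) = B ** A - C ** A"
  by (simp add: vec_eq_iff mult_nth left_diff_distrib sum_subtractf)
lemma matrix_diff_ldistrib: "(A::'n::finite cmat) ** (B - C) = A ** B - A ** C"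
  by (simp add: vec_eq_iff mult_nth right_diff_distrib sum_subtractf)
lemma mat1_cscale: "A ** (c *\<^sub>M mat 1) = c *\<^sub>M A" "(c *\<^sub>M mat 1) ** A = c *\<^sub>M A"
  by simp_all

lemma adj_adj[simp]: "adjoint_mat (adjoint_mat A) = A"
  by (simp add: vec_eq_iff)
lemma adj_add[simp]: "adjoint_mat (A + B) = adjoint_mat A + adjoint_mat B"
  by (simp add: vec_eq_iff)
lemma adj_diff[simp]: "adjoint_mat (A - B) = adjoint_mat A - adjoint_mat B"
  by (simp add: vec_eq_iff)
lemma adj_cscale[simp]: "adjoint_mat (c *\<^sub>M A) = cnj c *\<^sub>M adjoint_mat A"
  by (simp add: vec_eq_iff)
lemma adj_mult[simp]: "adjoint_mat (A ** B) = adjoint_mat B ** adjoint_mat A"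
  by (simp add: vec_eq_iff mult_nth mult.commute)
lemma mtrace_adj: "mtrace (adjoint_mat A) = cnj (mtrace A)"
  by (simp add: mtrace_def)

lemma herm_add: "hermitian A \<Longrightarrow> hermitian B \<Longrightarrow> hermitian (A + B)"
  by (simp add: hermitian_def)
lemma herm_diff: "hermitian A \<Longrightarrow> hermitian B \<Longrightarrow> hermitian (A - B)"
  by (simp add: hermitian_def)
lemma herm_scaleR: "hermitian A \<Longrightarrow> hermitian (r *\<^sub>R A)"
  by (simp add: hermitian_def cscale_scaleR)
lemma herm_cscale_real: "hermitian A \<Longrightarrow> cnj c = c \<Longrightarrow> hermitian (c *\<^sub>M A)"
  by (simp add: hermitian_def)
lemma herm_entry: "hermitian A \<Longrightarrow> A $ j $ i = cnj (A $ i $ j)"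
  unfolding hermitian_def by (metis adj_nth complex_cnj_cnj)



definition qf :: "'n::finite cmat \<Rightarrow> complex^'n \<Rightarrow> real" where
  "qf \<rho> x = Re (\<Sum>i\<in>UNIV. cnj (x $ i) * (\<rho> *v x) $ i)"

lemma quad_trace:
  "Re (mtrace (adjoint_mat N ** \<rho> ** N)) = (\<Sum>j\<in>UNIV. qf \<rho> (column j N))"
proof -
  have "mtrace (adjoint_mat N ** \<rho> ** N) =
     (\<Sum>j\<in>UNIV. \<Sum>i\<in>UNIV. cnj (column j N $ i) * (\<rho> *v column j N) $ i)"
    unfolding mtrace_def
  proof (rule sum.cong[OF refl])
    fix j
    show "(adjoint_mat N ** \<rho> ** N) $ j $ j =
      (\<Sum>i\<in>UNIV. cnj (column j N $ i) * (\<rho> *v column j N) $ i)"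
      apply (simp add: mult_nth column_def matrix_vector_mult_def sum_distrib_left
          sum_distrib_right mult.assoc)
      apply (rule sum.swap)
      done
  qed
  then show ?thesis by (simp add: qf_def)
qed

lemma qf_zero[simp]: "qf \<rho> 0 = 0"
  by (simp add: qf_def)

lemma posdef_qf: "pos_def \<rho> \<Longrightarrow> 0 \<le> qf \<rho> x"
  by (cases "x = 0") (auto simp: pos_def_def qf_def intro: less_imp_le)

lemma posdef_qf_pos: "pos_def \<rho> \<Longrightarrow> x \<noteq> 0 \<Longrightarrow> 0 < qf \<rho> x"
  by (auto simp: pos_def_def qf_def)

lemma posdef_trace_nonneg:
  "pos_def \<rho> \<Longrightarrow> 0 \<le> Re (mtrace (adjoint_mat N ** \<rho> ** N))"
  unfolding quad_trace by (rule sum_nonneg) (rule posdef_qf)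

lemma posdef_trace_zero:
  assumes "pos_def \<rho>" "Re (mtrace (adjoint_mat N ** \<rho> ** N)) = 0"
  shows "N = 0"
proof -
  have "\<forall>j\<in>UNIV. qf \<rho> (column j N) = 0"
    using assms(2) unfolding quad_trace
    by (simp add: sum_nonneg_eq_0_iff posdef_qf[OF assms(1)])
  then have "\<forall>j. column j N = 0"
    using posdef_qf_pos[OF assms(1)] by (metis less_irrefl UNIV_I)
  then show ?thesis
    by (simp add: vec_eq_iff column_def)
qed

definition lyap :: "'n::finite cmat \<Rightarrow> 'n cmat \<Rightarrow> 'n cmat" where
  "lyap \<rho> L = (1/2) *\<^sub>M (\<rho> ** L + L ** \<rho>)"

lemma lyap_linear: "linear (lyap \<rho>)"
  apply (rule linearI)
   apply (simp add: lyap_def matrix_add_ldistrib matrix_add_rdistrib' cscale_add algebra_simps)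
  apply (simp add: lyap_def cscale_scaleR cscale_add mult.commute)
  done

lemma lyap_zero:
  assumes "pos_def \<rho>" "lyap \<rho> L = 0"
  shows "L = 0"
proof -
  have h: "hermitian \<rho>" using assms(1) by (simp add: pos_def_def)
  have "\<rho> ** L + L ** \<rho> = 2 *\<^sub>M lyap \<rho> L" by (simp add: lyap_def)
  then have e: "\<rho> ** L + L ** \<rho> = 0" using assms(2) by simp
  have "mtrace (adjoint_mat L ** (\<rho> ** L + L ** \<rho>)) = 0" by (simp add: e mtrace_def)
  then have t0: "mtrace (adjoint_mat L ** \<rho> ** L) + mtrace (adjoint_mat (adjoint_mat L) ** \<rho> ** adjoint_mat L) = 0"
    by (simp add: matrix_add_ldistrib matrix_mul_assoc mtrace_comm[of "adjoint_mat L ** L" \<rho>]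
        mtrace_comm[of "adjoint_mat L" "L ** \<rho>"] mtrace_comm[of "\<rho> ** adjoint_mat L" L])
  have "Re (mtrace (adjoint_mat L ** \<rho> ** L)) + Re (mtrace (adjoint_mat (adjoint_mat L) ** \<rho> ** adjoint_mat L)) = 0"
    using arg_cong[where f=Re, OF t0] by simp
  moreover note posdef_trace_nonneg[OF assms(1), of L] posdef_trace_nonneg[OF assms(1), of "adjoint_mat L"]
  ultimately have "Re (mtrace (adjoint_mat L ** \<rho> ** L)) = 0" by linarith
  then show ?thesis by (rule posdef_trace_zero[OF assms(1)])
qed

lemma lyap_bij:
  assumes "pos_def \<rho>"
  shows "\<exists>!L. lyap \<rho> L = X"
proof -
  have inj: "inj (lyap \<rho>)"
    using lyap_linear linear_injective_0 lyap_zero[OF assms] by blast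
  have "surj (lyap \<rho>)"
    by (rule linear_injective_imp_surjective[OF lyap_linear inj]) simp
  then obtain L where "lyap \<rho> L = X" by (metis surjD)
  then show ?thesis using inj by (auto dest: injD)
qed

lemma SLD_eq: "pos_def \<rho> \<Longrightarrow> lyap \<rho> (SLD \<rho> X) = X"
  unfolding SLD_def using theI'[OF lyap_bij] by (simp add: lyap_def)

lemma SLD_unique: "pos_def \<rho> \<Longrightarrow> lyap \<rho> L = X \<Longrightarrow> SLD \<rho> X = L"
  unfolding SLD_def using the1_equality[OF lyap_bij] by (simp add: lyap_def)

lemma trace_sym:
  "mtrace ((1/2) *\<^sub>M (\<rho> ** (P ** Q + Q ** P))) = mtrace (P ** lyap \<rho> Q)"
  unfolding lyap_def
  by (simp add: matrix_add_ldistrib matrix_mul_assoc mtrace_comm[of "\<rho> ** P" Q]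
      mtrace_comm[of "\<rho> ** Q" P] mtrace_comm[of "Q ** \<rho>" P] algebra_simps)

lemma QF_eq: "pos_def \<rho> \<Longrightarrow> QF \<rho> A X = Re (mtrace (SLD \<rho> A ** X))"
  unfolding QF_def
  using trace_sym[of \<rho> "SLD \<rho> A" "SLD \<rho> X"] SLD_eq[of \<rho> X] by simp



lemma MF_herm: "hermitian (MF F \<rho>)"
  unfolding hermitian_def
  by (auto simp: vec_eq_iff MF_def not_less_iff_gr_or_eq)

lemma trace_real:
  assumes "hermitian A" "hermitian B"
  shows "cnj (mtrace (A ** B)) = mtrace (A ** B)"
proof -
  have "cnj (mtrace (A ** B)) = mtrace (adjoint_mat (A ** B))" by (rule mtrace_adj[symmetric])
  also have "\<dots> = mtrace (B ** A)" using assms by (simp add: hermitian_def)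
  also have "\<dots> = mtrace (A ** B)" by (rule mtrace_comm)
  finally show ?thesis .
qed

lemma mtrace_mat1: "mtrace (mat 1 :: 'n::finite cmat) = of_nat CARD('n)"
  by (simp add: mtrace_def mat_def)

lemma herm_mult_sym: "hermitian A \<Longrightarrow> hermitian B \<Longrightarrow> hermitian (A ** B + B ** A)"
  by (simp add: hermitian_def add.commute)

lemma herm_lyap: "hermitian \<rho> \<Longrightarrow> hermitian L \<Longrightarrow> hermitian (lyap \<rho> L)"
  unfolding lyap_def by (rule herm_cscale_real) (auto simp: herm_mult_sym)

lemma herm_mat1: "hermitian (mat 1 :: 'n::finite cmat)"
  by (simp add: hermitian_def vec_eq_iff mat_def)

definition Lg :: "'n::finite cmat \<Rightarrow> 'n cmat \<Rightarrow> 'n cmat" where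
  "Lg \<rho> M = M - mtrace (\<rho> ** M) *\<^sub>M mat 1"

lemma lyap_Lg:
  "lyap \<rho> (Lg \<rho> M) = (1/2) *\<^sub>M (\<rho> ** M + M ** \<rho>) - mtrace (\<rho> ** M) *\<^sub>M \<rho>"
  unfolding lyap_def Lg_def
  by (simp add: matrix_diff_ldistrib matrix_diff_rdistrib cscale_diff cscale_add vec_eq_iff algebra_simps)

lemma herm_Lg: "hermitian \<rho> \<Longrightarrow> hermitian M \<Longrightarrow> hermitian (Lg \<rho> M)"
  unfolding Lg_def
  by (intro herm_diff herm_cscale_real herm_mat1 trace_real)

lemma trace_Lg_tangent: "X \<in> tangent \<Longrightarrow> mtrace (Lg \<rho> M ** X) = mtrace (M ** X)"
  by (simp add: Lg_def tangent_def matrix_diff_rdistrib)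

lemma G_tangent:
  assumes "\<rho> \<in> Pdot" "hermitian M"
  shows "lyap \<rho> (Lg \<rho> M) \<in> tangent"
proof -
  have h: "hermitian \<rho>" "mtrace \<rho> = 1" using assms(1) by (auto simp: Pdot_def pos_def_def)
  have "mtrace (lyap \<rho> (Lg \<rho> M)) = 0"
    unfolding lyap_Lg using h by (simp add: mtrace_comm[of M \<rho>] field_simps)
  then show ?thesis using herm_lyap[OF h(1) herm_Lg[OF h(1) assms(2)]]
    by (simp add: tangent_def)
qed



lemma vcomp: "(r *\<^sub>R (x::complex^'n::finite)) $ i = complex_of_real r * x $ i"
  unfolding vector_scaleR_component by (rule scaleR_conv_of_real)
lemma mcomp: "(A + r *\<^sub>R (B::'n::finite cmat)) $ i $ j = A $ i $ j + complex_of_real r * B $ i $ j"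
  unfolding vector_add_component vector_scaleR_component by (simp only: scaleR_conv_of_real)

lemma qf_scaleR: "qf \<rho> (r *\<^sub>R x) = r^2 * qf \<rho> x"
proof -
  have "(\<Sum>i\<in>UNIV. cnj ((r *\<^sub>R x) $ i) * (\<rho> *v (r *\<^sub>R x)) $ i)
      = complex_of_real (r^2) * (\<Sum>i\<in>UNIV. cnj (x $ i) * (\<rho> *v x) $ i)"
    by (simp add: matrix_vector_mult_def vcomp sum_distrib_left power2_eq_square
        algebra_simps del: vector_scaleR_component)
  then show ?thesis by (simp add: qf_def)
qed

lemma qf_add: "qf (A + r *\<^sub>R B) x = qf A x + r * qf B x"
proof -
  have "(\<Sum>i\<in>UNIV. cnj (x $ i) * ((A + r *\<^sub>R B) *v x) $ i)
      = (\<Sum>i\<in>UNIV. cnj (x $ i) * (A *v x) $ i) + complex_of_real r * (\<Sum>i\<in>UNIV. cnj (x $ i) * (B *v x) $ i)"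
    by (simp add: matrix_vector_mult_def mcomp sum_distrib_left sum.distrib
        algebra_simps del: vector_scaleR_component vector_add_component)
  then show ?thesis by (simp add: qf_def)
qed

lemma cont_nth: "continuous_on UNIV (\<lambda>x::complex^'n::finite. x $ i)"
  by (rule linear_continuous_on) (rule bounded_linear_vec_nth)

lemma qf_cont: "continuous_on UNIV (qf \<rho>)"
  unfolding qf_def matrix_vector_mult_def
  by (auto intro!: continuous_intros cont_nth)

lemma qf_lower:
  fixes \<rho> :: "'n::finite cmat"
  assumes "pos_def \<rho>"
  shows "\<exists>m>0. \<forall>x. m * (norm x)^2 \<le> qf \<rho> x"
proof -
  obtain e :: "complex^'n" where e: "norm e = 1"
    using vector_choose_size[of 1] by auto
  then have "e \<in> sphere 0 1" by (simp add: sphere_def dist_norm)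
  then have ne: "sphere (0::complex^'n) 1 \<noteq> {}" by blast
  obtain x0 where x0: "x0 \<in> sphere 0 1" "\<And>y. y \<in> sphere 0 1 \<Longrightarrow> qf \<rho> x0 \<le> qf \<rho> y"
    using continuous_attains_inf[OF compact_sphere ne continuous_on_subset[OF qf_cont]] by blast
  have "x0 \<noteq> 0" using x0(1) by auto
  then have m: "0 < qf \<rho> x0" by (rule posdef_qf_pos[OF assms])
  have "qf \<rho> x0 * (norm x)^2 \<le> qf \<rho> x" for x
  proof (cases "x = 0")
    case True then show ?thesis by simp
  next
    case False
    let ?u = "(1 / norm x) *\<^sub>R x"
    have "?u \<in> sphere 0 1" using False by (simp add: sphere_def dist_norm)
    then have "qf \<rho> x0 \<le> qf \<rho> ?u" by (rule x0(2))
    also have "\<dots> = qf \<rho> x / (norm x)^2" by (simp add: qf_scaleR power_divide)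
    finally show ?thesis using False by (simp add: field_simps)
  qed
  then show ?thesis using m by blast
qed

lemma qf_upper: "\<bar>qf X x\<bar> \<le> (\<Sum>i\<in>UNIV. \<Sum>j\<in>UNIV. norm (X $ i $ j)) * (norm x)^2"
proof -
  have "qf X x = Re (\<Sum>i\<in>UNIV. \<Sum>j\<in>UNIV. cnj (x $ i) * (X $ i $ j * x $ j))"
    by (simp only: qf_def matrix_vector_mult_def vec_lambda_beta sum_distrib_left)
  then have "\<bar>qf X x\<bar> \<le> norm (\<Sum>i\<in>UNIV. \<Sum>j\<in>UNIV. cnj (x $ i) * (X $ i $ j * x $ j))"
    by (simp only: abs_Re_le_cmod)
  also have "\<dots> \<le> (\<Sum>i\<in>UNIV. \<Sum>j\<in>UNIV. norm (cnj (x $ i) * (X $ i $ j * x $ j)))"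
    by (rule order_trans[OF norm_sum sum_mono]) (rule norm_sum)
  also have "\<dots> \<le> (\<Sum>i\<in>UNIV. \<Sum>j\<in>UNIV. norm (X $ i $ j) * (norm x)^2)"
  proof (intro sum_mono)
    fix i j
    have "norm (cnj (x $ i) * (X $ i $ j * x $ j)) = norm (X $ i $ j) * (norm (x $ i) * norm (x $ j))"
      by (simp add: norm_mult)
    also have "\<dots> \<le> norm (X $ i $ j) * (norm x * norm x)"
      by (intro mult_left_mono mult_mono Finite_Cartesian_Product.norm_nth_le) auto
    finally show "norm (cnj (x $ i) * (X $ i $ j * x $ j)) \<le> norm (X $ i $ j) * (norm x)^2"
      by (simp add: power2_eq_square)
  qed
  also have "\<dots> = (\<Sum>i\<in>UNIV. \<Sum>j\<in>UNIV. norm (X $ i $ j)) * (norm x)^2"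
    by (simp add: sum_distrib_right)
  finally show ?thesis .
qed

lemma posdef_near:
  assumes "pos_def \<rho>" "hermitian X"
  shows "\<exists>d>0. \<forall>t. \<bar>t\<bar> < d \<longrightarrow> pos_def (\<rho> + t *\<^sub>R X)"
proof -
  obtain m where m: "m > 0" "\<And>x. m * (norm x)^2 \<le> qf \<rho> x" using qf_lower[OF assms(1)] by blast
  define K where "K = (\<Sum>i\<in>UNIV. \<Sum>j\<in>UNIV. norm (X $ i $ j)) + 1"
  have K0: "0 \<le> (\<Sum>i\<in>UNIV. \<Sum>j\<in>UNIV. norm (X $ i $ j))" by (intro sum_nonneg norm_ge_zero)
  then have K: "K > 0" unfolding K_def by linarith
  have "pos_def (\<rho> + t *\<^sub>R X)" if t: "\<bar>t\<bar> < m / K" for t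
  proof -
    have "hermitian (\<rho> + t *\<^sub>R X)"
      using assms by (auto simp: pos_def_def intro: herm_add herm_scaleR)
    moreover have "0 < qf (\<rho> + t *\<^sub>R X) x" if "x \<noteq> 0" for x
    proof -
      have n: "0 < (norm x)^2" using that by simp
      have u: "\<bar>qf X x\<bar> \<le> K * (norm x)^2"
      proof -
        have "(\<Sum>i\<in>UNIV. \<Sum>j\<in>UNIV. norm (X $ i $ j)) * (norm x)^2 \<le> K * (norm x)^2"
          unfolding K_def using n by (intro mult_right_mono) auto
        then show ?thesis using qf_upper[of X x] by linarith
      qed
      have "\<bar>t * qf X x\<bar> \<le> \<bar>t\<bar> * (K * (norm x)^2)"
        by (simp add: abs_mult mult_left_mono u)
      also have "\<dots> < (m / K) * (K * (norm x)^2)"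
        using t K n by (intro mult_strict_right_mono) auto
      also have "\<dots> = m * (norm x)^2" using K by simp
      finally have "\<bar>t * qf X x\<bar> < m * (norm x)^2" .
      then show ?thesis using m(2)[of x] by (simp add: qf_add)
    qed
    ultimately show ?thesis unfolding pos_def_def qf_def by blast
  qed
  then show ?thesis using m K by (intro exI[of _ "m / K"]) auto
qed



lemma chain:
  fixes F :: "'n::finite cmat \<Rightarrow> real"
  assumes F: "(F has_derivative F') (at \<rho> within U)"
    and g: "(\<gamma> has_vector_derivative X) (at 0)" and g0: "\<gamma> 0 = \<rho>"
    and ev: "\<forall>\<^sub>F t in nhds 0. \<gamma> t \<in> U"
  shows "((\<lambda>t. F (\<gamma> t)) has_real_derivative F' X) (at 0)"
proof -
  obtain S where S: "open S" "0 \<in> S" "\<forall>t\<in>S. \<gamma> t \<in> U"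
    using ev unfolding eventually_nhds by blast
  have g': "(\<gamma> has_derivative (\<lambda>h. h *\<^sub>R X)) (at 0 within S)"
    using g unfolding has_vector_derivative_def by (rule has_derivative_at_withinI)
  have F'': "(F has_derivative F') (at (\<gamma> 0) within \<gamma> ` S)"
  proof -
    have "\<gamma> ` S \<subseteq> U" using S(3) by auto
    then show ?thesis using has_derivative_subset[OF F] g0 by auto
  qed
  have "((F \<circ> \<gamma>) has_derivative (F' \<circ> (\<lambda>h. h *\<^sub>R X))) (at 0 within S)"
    by (rule diff_chain_within[OF g' F''])
  then have c: "((F \<circ> \<gamma>) has_derivative (F' \<circ> (\<lambda>h. h *\<^sub>R X))) (at 0)"
    using at_within_open[OF S(2,1)] by simp
  have lin: "linear F'" using has_derivative_bounded_linear[OF F] bounded_linear.linear by blast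
  have "(F' \<circ> (\<lambda>h. h *\<^sub>R X)) = (*) (F' X)"
    by (rule ext) (simp add: linear_scale[OF lin])
  with c show ?thesis unfolding has_field_derivative_def comp_def by simp
qed

lemma line_deriv: "((\<lambda>t::real. \<rho> + t *\<^sub>R E) has_vector_derivative E) (at 0)"
  by (auto intro!: derivative_eq_intros simp: has_vector_derivative_def)

lemma line_ev_U:
  assumes "openin (top_of_set Herm) U" "\<rho> \<in> U" "hermitian E"
  shows "\<forall>\<^sub>F t in nhds 0. \<rho> + t *\<^sub>R E \<in> U"
proof -
  obtain T where T: "open T" "U = Herm \<inter> T" using assms(1) unfolding openin_open by blast
  have h: "hermitian \<rho>" using assms(2) T(2) by (auto simp: Herm_def)
  have id: "((\<lambda>t. t) \<longlongrightarrow> (0::real)) (nhds 0)" by (rule filterlim_ident)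
  have "((\<lambda>t::real. \<rho> + t *\<^sub>R E) \<longlongrightarrow> \<rho> + 0 *\<^sub>R E) (nhds 0)"
    by (intro tendsto_add tendsto_const tendsto_scaleR id)
  then have "((\<lambda>t::real. \<rho> + t *\<^sub>R E) \<longlongrightarrow> \<rho>) (nhds 0)" by simp
  then have "\<forall>\<^sub>F t in nhds 0. \<rho> + t *\<^sub>R E \<in> T"
    using T assms(2) by (auto intro: topological_tendstoD)
  then show ?thesis
    by eventually_elim (use T h assms(3) in \<open>auto simp: Herm_def intro: herm_add herm_scaleR\<close>)
qed

lemma pderiv_F':
  assumes "openin (top_of_set Herm) U" "\<rho> \<in> U" "hermitian E"
    and F: "(F has_derivative F') (at \<rho> within U)"
  shows "pderiv_dir F \<rho> E = F' E"
proof -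
  have "((\<lambda>t. F (\<rho> + t *\<^sub>R E)) has_real_derivative F' E) (at 0)"
    by (rule chain[OF F line_deriv]) (auto intro: line_ev_U[OF assms(1-3)])
  then show ?thesis unfolding pderiv_dir_def by (rule DERIV_imp_deriv)
qed



definition Dx :: "'n::finite \<Rightarrow> 'n \<Rightarrow> 'n cmat" where
  "Dx a b = mat_unit a b + mat_unit b a"
definition Dy :: "'n::finite \<Rightarrow> 'n \<Rightarrow> 'n cmat" where
  "Dy a b = \<i> *\<^sub>M mat_unit a b - \<i> *\<^sub>M mat_unit b a"

definition Tm :: "'n::{finite,linorder} cmat \<Rightarrow> 'n \<Rightarrow> 'n \<Rightarrow> 'n cmat" where
  "Tm X a b = (if a < b then complex_of_real (Re (X $ a $ b)) *\<^sub>M Dx a b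
       + complex_of_real (Im (X $ a $ b)) *\<^sub>M Dy a b
     else if a = b then complex_of_real (Re (X $ a $ a)) *\<^sub>M mat_unit a a else 0)"

lemma sum2_delta:
  fixes f :: "'a::finite \<Rightarrow> 'a \<Rightarrow> 'b::comm_monoid_add"
  shows "(\<Sum>a\<in>UNIV. \<Sum>b\<in>UNIV. if i = a \<and> j = b then f a b else 0) = f i j"
proof -
  have "(\<Sum>a\<in>UNIV. \<Sum>b\<in>UNIV. if i = a \<and> j = b then f a b else 0)
      = (\<Sum>a\<in>UNIV. if a = i then f a j else 0)"
    by (rule sum.cong[OF refl]) (case_tac "x = i", simp_all)
  also have "\<dots> = f i j" by simp
  finally show ?thesis .
qed

lemma sum2_delta2:
  fixes f :: "'a::finite \<Rightarrow> 'a \<Rightarrow> 'b::comm_monoid_add"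
  shows "(\<Sum>a\<in>UNIV. \<Sum>b\<in>UNIV. if i = b \<and> j = a then f a b else 0) = f j i"
proof -
  have "(\<Sum>a\<in>UNIV. \<Sum>b\<in>UNIV. if i = b \<and> j = a then f a b else 0)
      = (\<Sum>a\<in>UNIV. \<Sum>b\<in>UNIV. if j = a \<and> i = b then f a b else 0)"
    by (simp add: conj_commute)
  then show ?thesis by (simp add: sum2_delta)
qed

definition g1 :: "'n::{finite,linorder} cmat \<Rightarrow> 'n \<Rightarrow> 'n \<Rightarrow> complex" where
  "g1 X a b = (if a < b then complex_of_real (Re (X $ a $ b)) + \<i> * complex_of_real (Im (X $ a $ b))
     else if a = b then complex_of_real (Re (X $ a $ a)) else 0)"
definition g2 :: "'n::{finite,linorder} cmat \<Rightarrow> 'n \<Rightarrow> 'n \<Rightarrow> complex" where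
  "g2 X a b = (if a < b then complex_of_real (Re (X $ a $ b)) - \<i> * complex_of_real (Im (X $ a $ b)) else 0)"

lemma mu: "(mat_unit a b :: 'n::finite cmat) $ i $ j = (if i = a \<and> j = b then 1 else 0)"
  unfolding mat_unit_def by simp

lemma Tm_entry:
  "Tm X a b $ i $ j = (if i = a \<and> j = b then g1 X a b else 0) + (if i = b \<and> j = a then g2 X a b else 0)"
proof -
  consider "a < b" | "a = b" | "b < a" using less_linear by blast
  then show ?thesis
  proof cases
    case 1
    then have ne: "a \<noteq> b" by simp
    have e: "Tm X a b $ i $ j = complex_of_real (Re (X $ a $ b)) * ((if i = a \<and> j = b then 1 else 0) + (if i = b \<and> j = a then 1 else 0))
       + complex_of_real (Im (X $ a $ b)) * (\<i> * (if i = a \<and> j = b then 1 else 0) - \<i> * (if i = b \<and> j = a then 1 else 0))"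
      using 1 by (simp only: Tm_def if_True Dx_def Dy_def vector_add_component vector_minus_component cscale_nth mu)
    show ?thesis
      unfolding e using 1 ne by (cases "i = a \<and> j = b"; cases "i = b \<and> j = a") (auto simp: g1_def g2_def)
  next
    case 2
    have e: "Tm X a b $ i $ j = complex_of_real (Re (X $ a $ a)) * (if i = a \<and> j = a then 1 else 0)"
      using 2 by (simp only: Tm_def if_True if_False less_irrefl cscale_nth mu simp_thms)
    show ?thesis unfolding e using 2 by (auto simp: g1_def g2_def)
  next
    case 3
    then have n: "\<not> a < b" "a \<noteq> b" by auto
    then show ?thesis by (simp add: Tm_def g1_def g2_def)
  qed
qed

lemma g_lt: "i < j \<Longrightarrow> X $ i $ j = g1 X i j + g2 X j i"
  by (simp add: g1_def g2_def complex_eq_iff)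

lemma g_gt: "j < i \<Longrightarrow> Re (X $ i $ j) = Re (X $ j $ i) \<Longrightarrow> Im (X $ i $ j) = - Im (X $ j $ i) \<Longrightarrow> X $ i $ j = g1 X i j + g2 X j i"
proof -
  assume a: "j < i" "Re (X $ i $ j) = Re (X $ j $ i)" "Im (X $ i $ j) = - Im (X $ j $ i)"
  then have "\<not> i < j" "i \<noteq> j" by auto
  with a show ?thesis by (simp add: g1_def g2_def complex_eq_iff)
qed

lemma g_eq: "Im (X $ j $ j) = 0 \<Longrightarrow> X $ j $ j = g1 X j j + g2 X j j"
  by (simp add: g1_def g2_def complex_eq_iff)

lemma X_decomp:
  assumes "hermitian X"
  shows "X = (\<Sum>a\<in>UNIV. \<Sum>b\<in>UNIV. Tm X a b)"
proof -
  have xg: "X $ i $ j = g1 X i j + g2 X j i" for i j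
  proof -
    consider "i < j" | "j < i" | "i = j" using less_linear[of i j] by blast
    then show ?thesis
    proof cases
      case 1 then show ?thesis by (rule g_lt)
    next
      case 2
      have e: "X $ i $ j = cnj (X $ j $ i)" by (rule herm_entry[OF assms])
      have "Re (X $ i $ j) = Re (X $ j $ i)" "Im (X $ i $ j) = - Im (X $ j $ i)"
        using arg_cong[where f=Re, OF e] arg_cong[where f=Im, OF e] by simp_all
      with 2 show ?thesis by (rule g_gt)
    next
      case 3
      have e: "X $ j $ j = cnj (X $ j $ j)" by (rule herm_entry[OF assms])
      have "Im (X $ j $ j) = 0" using arg_cong[where f=Im, OF e] by simp
      then have "X $ j $ j = g1 X j j + g2 X j j" by (rule g_eq)
      then show ?thesis using 3 by simp
    qed
  qed
  have "(\<Sum>a\<in>UNIV. \<Sum>b\<in>UNIV. Tm X a b) $ i $ j = X $ i $ j" for i j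
  proof -
    have "(\<Sum>a\<in>UNIV. \<Sum>b\<in>UNIV. Tm X a b) $ i $ j = (\<Sum>a\<in>UNIV. \<Sum>b\<in>UNIV. Tm X a b $ i $ j)"
      by (simp only: sum_component)
    also have "\<dots> = (\<Sum>a\<in>UNIV. \<Sum>b\<in>UNIV. if i = a \<and> j = b then g1 X a b else 0)
       + (\<Sum>a\<in>UNIV. \<Sum>b\<in>UNIV. if i = b \<and> j = a then g2 X a b else 0)"
      by (simp only: Tm_entry sum.distrib)
    also have "\<dots> = g1 X i j + g2 X j i" by (simp only: sum2_delta sum2_delta2)
    finally show ?thesis by (simp only: xg[of i j, symmetric])
  qed
  then show ?thesis by (simp add: vec_eq_iff)
qed

lemma adj_mu: "adjoint_mat (mat_unit a b :: 'n::finite cmat) = mat_unit b a"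
proof -
  have "cnj (mat_unit a b $ j $ i) = (mat_unit b a :: 'n cmat) $ i $ j" for i j
    unfolding mu by (cases "j = a \<and> i = b") auto
  then show ?thesis by (simp add: vec_eq_iff)
qed
lemma Dx_herm: "hermitian (Dx a b)"
  unfolding hermitian_def Dx_def by (simp add: adj_mu add.commute)
lemma Dy_herm: "hermitian (Dy a b)"
  unfolding hermitian_def Dy_def by (simp add: adj_mu vec_eq_iff)
lemma Dz_herm: "hermitian (mat_unit a a)"
  unfolding hermitian_def by (simp add: adj_mu)

lemma F'_trace:
  fixes F :: "'n::{finite,linorder} cmat \<Rightarrow> real"
  assumes lin: "linear F'"
    and pd: "\<And>E. hermitian E \<Longrightarrow> pderiv_dir F \<rho> E = F' E"
    and X: "hermitian X"
  shows "F' X = Re (mtrace (MF F \<rho> ** X))"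
proof -
  define s where "s a b = (if a < b then Re (X $ a $ b) * dx F \<rho> a b + Im (X $ a $ b) * dy F \<rho> a b
     else if a = b then Re (X $ a $ a) * dz F \<rho> a else 0)" for a b
  have Ts: "F' (Tm X a b) = s a b" for a b
  proof -
    have hx: "dx F \<rho> a b = F' (Dx a b)" using pd[OF Dx_herm, of a b] by (simp add: dx_def Dx_def)
    have hy: "dy F \<rho> a b = F' (Dy a b)" using pd[OF Dy_herm, of a b] by (simp add: dy_def Dy_def)
    have hz: "dz F \<rho> a = F' (mat_unit a a)" using pd[OF Dz_herm, of a] by (simp add: dz_def)
    consider "a < b" | "a = b" | "b < a" using less_linear by blast
    then show ?thesis
    proof cases
      case 1 then show ?thesis
        by (simp add: Tm_def s_def cscale_scaleR[symmetric] linear_add[OF lin] linear_scale[OF lin] hx hy)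
    next
      case 2 then show ?thesis using hz
        by (simp add: Tm_def s_def cscale_scaleR[symmetric] linear_scale[OF lin])
    next
      case 3
      then have n: "\<not> a < b" "a \<noteq> b" by auto
      then show ?thesis by (simp add: Tm_def s_def linear_0[OF lin])
    qed
  qed
  have "F' X = (\<Sum>a\<in>UNIV. \<Sum>b\<in>UNIV. s a b)"
    by (subst X_decomp[OF X]) (simp add: linear_sum[OF lin] Ts)
  also have "\<dots> = Re (mtrace (MF F \<rho> ** X))"
  proof -
    define r where "r j k = Re (MF F \<rho> $ j $ k * X $ k $ j)" for j k
    have "Re (mtrace (MF F \<rho> ** X)) = (\<Sum>j\<in>UNIV. \<Sum>k\<in>UNIV. r j k)"
      by (simp add: mtrace_def mult_nth r_def)
    also have "\<dots> = (\<Sum>j\<in>UNIV. \<Sum>k\<in>UNIV. (if j < k then r j k else 0) + (if k < j then r j k else 0)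
                 + (if j = k then r j k else 0))"
      by (intro sum.cong refl) auto
    also have "\<dots> = (\<Sum>j\<in>UNIV. \<Sum>k\<in>UNIV. (if j < k then r j k else 0))
        + (\<Sum>j\<in>UNIV. \<Sum>k\<in>UNIV. (if k < j then r j k else 0))
        + (\<Sum>j\<in>UNIV. \<Sum>k\<in>UNIV. (if j = k then r j k else 0))"
      by (simp add: sum.distrib)
    also have "(\<Sum>j\<in>UNIV. \<Sum>k\<in>UNIV. (if k < j then r j k else 0))
        = (\<Sum>j\<in>UNIV. \<Sum>k\<in>UNIV. (if j < k then r k j else 0))"
      by (rule sum.swap)
    also have "(\<Sum>j\<in>UNIV. \<Sum>k\<in>UNIV. (if j < k then r j k else 0))
        + (\<Sum>j\<in>UNIV. \<Sum>k\<in>UNIV. (if j < k then r k j else 0))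
        + (\<Sum>j\<in>UNIV. \<Sum>k\<in>UNIV. (if j = k then r j k else 0))
       = (\<Sum>j\<in>UNIV. \<Sum>k\<in>UNIV. (if j < k then r j k + r k j else if j = k then r j j else 0))"
      by (simp only: sum.distrib[symmetric]) (intro sum.cong refl, auto)
    also have "\<dots> = (\<Sum>a\<in>UNIV. \<Sum>b\<in>UNIV. s a b)"
    proof (intro sum.cong refl)
      fix j k :: 'n
      show "(if j < k then r j k + r k j else if j = k then r j j else 0) = s j k"
      proof (cases "j < k")
        case True
        have e: "X $ k $ j = cnj (X $ j $ k)" by (rule herm_entry[OF X])
        have re: "Re (X $ k $ j) = Re (X $ j $ k)" "Im (X $ k $ j) = - Im (X $ j $ k)"
          using arg_cong[where f=Re, OF e] arg_cong[where f=Im, OF e] by simp_all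
        have nk: "\<not> k < j" using True by auto
        show ?thesis using True nk re
          by (simp add: r_def s_def MF_def field_simps)
      next
        case False
        then show ?thesis by (auto simp: r_def s_def MF_def)
      qed
    qed
    finally show ?thesis by simp
  qed
  finally show ?thesis .
qed



lemma adj_lyap: "hermitian \<rho> \<Longrightarrow> adjoint_mat (lyap \<rho> L) = lyap \<rho> (adjoint_mat L)"
  by (simp add: lyap_def hermitian_def add.commute)

lemma mtrace_scaleR: "mtrace (t *\<^sub>R X) = complex_of_real t * mtrace X"
  by (simp add: cscale_scaleR)

lemma trace_N_lyap: "mtrace (N ** lyap \<rho> N) = mtrace (N ** \<rho> ** N)"
proof -
  have "mtrace (N ** lyap \<rho> N) = (1/2) * (mtrace (N ** \<rho> ** N) + mtrace (N ** N ** \<rho>))"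
    by (simp add: lyap_def matrix_add_ldistrib matrix_mul_assoc)
  also have "mtrace (N ** N ** \<rho>) = mtrace (N ** \<rho> ** N)"
    using mtrace_comm[of N "N ** \<rho>"] by (simp add: matrix_mul_assoc)
  finally show ?thesis by simp
qed

lemma tangent_diff: "A \<in> tangent \<Longrightarrow> B \<in> tangent \<Longrightarrow> A - B \<in> tangent"
  by (simp add: tangent_def herm_diff)

lemma line_in_Pdot:
  assumes "\<rho> \<in> Pdot" "X \<in> tangent"
  shows "\<forall>\<^sub>F t in nhds 0. \<rho> + t *\<^sub>R X \<in> Pdot"
proof -
  have pd: "pos_def \<rho>" "mtrace \<rho> = 1" using assms(1) by (auto simp: Pdot_def)
  have hX: "hermitian X" "mtrace X = 0" using assms(2) by (auto simp: tangent_def)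
  obtain d where d: "d > 0" "\<And>t. \<bar>t\<bar> < d \<Longrightarrow> pos_def (\<rho> + t *\<^sub>R X)"
    using posdef_near[OF pd(1) hX(1)] by blast
  show ?thesis unfolding eventually_nhds_metric
    using d pd(2) hX(2) by (intro exI[of _ d]) (auto simp: Pdot_def dist_real_def mtrace_scaleR)
qed

theorem lemma2p2:
  fixes F :: "('n::{finite,linorder}) cmat \<Rightarrow> real"
    and U :: "'n cmat set"
    and \<rho> :: "'n cmat"
  assumes "openin (top_of_set Herm) U"
    and "Pdot \<subseteq> U"
    and "F differentiable_on U"
    and "\<rho> \<in> Pdot"
  shows "is_grad F \<rho> ((1/2) *\<^sub>M (\<rho> ** MF F \<rho> + MF F \<rho> ** \<rho>) - mtrace (\<rho> ** MF F \<rho>) *\<^sub>M \<rho>)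
       \<and> (\<forall>G. is_grad F \<rho> G \<longrightarrow>
             G = (1/2) *\<^sub>M (\<rho> ** MF F \<rho> + MF F \<rho> ** \<rho>) - mtrace (\<rho> ** MF F \<rho>) *\<^sub>M \<rho>)"
proof -
  define M where "M = MF F \<rho>"
  define G where "G = (1/2) *\<^sub>M (\<rho> ** M + M ** \<rho>) - mtrace (\<rho> ** M) *\<^sub>M \<rho>"
  have pd: "pos_def \<rho>" and h\<rho>: "hermitian \<rho>" using assms(4) by (auto simp: Pdot_def pos_def_def)
  have \<rho>U: "\<rho> \<in> U" using assms(2,4) by blast
  obtain F' where F': "(F has_derivative F') (at \<rho> within U)"
    using assms(3) \<rho>U unfolding differentiable_on_def differentiable_def by blast
  have lin: "linear F'" using has_derivative_bounded_linear[OF F'] bounded_linear.linear by blast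
  have pdF: "pderiv_dir F \<rho> E = F' E" if "hermitian E" for E
    by (rule pderiv_F'[OF assms(1) \<rho>U that F'])
  have dF: "F' X = Re (mtrace (M ** X))" if "hermitian X" for X
    unfolding M_def by (rule F'_trace[OF lin pdF that])
  have hM: "hermitian M" unfolding M_def by (rule MF_herm)
  have GL: "lyap \<rho> (Lg \<rho> M) = G" unfolding G_def by (rule lyap_Lg)
  have Gtan: "G \<in> tangent" using G_tangent[OF assms(4) hM] GL by simp
  have SG: "SLD \<rho> G = Lg \<rho> M" by (rule SLD_unique[OF pd GL])
  have QFG: "QF \<rho> G X = F' X" if "X \<in> tangent" for X
  proof -
    have "QF \<rho> G X = Re (mtrace (Lg \<rho> M ** X))" by (simp add: QF_eq[OF pd] SG)
    also have "\<dots> = Re (mtrace (M ** X))" using trace_Lg_tangent[OF that] by simp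
    also have "\<dots> = F' X" using dF that by (simp add: tangent_def)
    finally show ?thesis .
  qed
  have curve: "((\<lambda>t. F (\<gamma> t)) has_real_derivative F' X) (at 0)"
    if "(\<forall>\<^sub>F t in nhds 0. \<gamma> t \<in> Pdot)" "\<gamma> 0 = \<rho>" "(\<gamma> has_vector_derivative X) (at 0)" for \<gamma> X
  proof (rule chain[OF F' that(3) that(2)])
    show "\<forall>\<^sub>F t in nhds 0. \<gamma> t \<in> U" using that(1) assms(2) by (auto elim: eventually_mono)
  qed
  have part1: "is_grad F \<rho> G"
    unfolding is_grad_def using Gtan QFG curve by auto
  have part2: "G' = G" if g': "is_grad F \<rho> G'" for G'
  proof -
    have G'tan: "G' \<in> tangent" using g' by (simp add: is_grad_def)
    have QFG': "QF \<rho> G' X = F' X" if X: "X \<in> tangent" for X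
    proof -
      have "((\<lambda>t. F (\<rho> + t *\<^sub>R X)) has_real_derivative QF \<rho> G' X) (at 0)"
        using g' X line_in_Pdot[OF assms(4) X] line_deriv[of \<rho> X] unfolding is_grad_def by auto
      moreover have "((\<lambda>t. F (\<rho> + t *\<^sub>R X)) has_real_derivative F' X) (at 0)"
        by (rule curve[OF line_in_Pdot[OF assms(4) X] _ line_deriv]) simp
      ultimately show ?thesis by (rule DERIV_unique)
    qed
    define L' where "L' = SLD \<rho> G'"
    have L'eq: "lyap \<rho> L' = G'" unfolding L'_def by (rule SLD_eq[OF pd])
    have hG': "hermitian G'" using G'tan by (simp add: tangent_def)
    have "lyap \<rho> (adjoint_mat L') = G'"
      using adj_lyap[OF h\<rho>, of L'] L'eq hG' by (simp add: hermitian_def)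
    then have "SLD \<rho> G' = adjoint_mat L'" by (rule SLD_unique[OF pd])
    then have hL': "hermitian L'" unfolding hermitian_def L'_def by simp
    define N where "N = L' - Lg \<rho> M"
    have hN: "hermitian N" unfolding N_def by (intro herm_diff hL' herm_Lg h\<rho> hM)
    define D where "D = G' - G"
    have DN: "lyap \<rho> N = D"
      unfolding N_def D_def using linear_diff[OF lyap_linear, of \<rho> L' "Lg \<rho> M"] L'eq GL by simp
    have Dtan: "D \<in> tangent" unfolding D_def by (rule tangent_diff[OF G'tan Gtan])
    have "Re (mtrace (L' ** D)) = QF \<rho> G' D" by (simp add: QF_eq[OF pd] L'_def)
    also have "\<dots> = QF \<rho> G D" using QFG'[OF Dtan] QFG[OF Dtan] by simp
    also have "\<dots> = Re (mtrace (Lg \<rho> M ** D))" by (simp add: QF_eq[OF pd] SG)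
    finally have "Re (mtrace (N ** D)) = 0" by (simp add: N_def matrix_diff_rdistrib)
    then have "Re (mtrace (adjoint_mat N ** \<rho> ** N)) = 0"
      using hN DN trace_N_lyap[of N \<rho>] by (simp add: hermitian_def)
    then have "N = 0" by (rule posdef_trace_zero[OF pd])
    then have "D = 0" using DN by (simp add: lyap_def)
    then show ?thesis unfolding D_def by simp
  qed
  show ?thesis using part1 part2 unfolding G_def M_def by blast
qed


end
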